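(* Let $\epsilon>0$ and let $E\subset[0,3/2-\epsilon]$ be a measurable set with Lebesgue measure $m(E)=1$, and suppose $E$ tiles $\mathbb{R}$ with respect to $\mathbb{Z}$. Then $\widehat{\chi_E}(\xi)\neq 0$ for all $\xi$ with $-1/2\leq\xi\leq 1/2$.
   Context: $E$ tiles $\mathbb{R}$ with respect to $\mathbb{Z}$ means $\sum_{k\in\mathbb{Z}}\chi_E(x-k)=1$ for almost every $x\in\mathbb{R}$, where $\chi_E$ is the indicator function of $E$. The Fourier transform is $\widehat{\chi_E}(\xi)=\int_E e^{-2\pi i x\xi}\,dx$. *)

theory Defs
  imports "HOL-Analysis.Analysis"
begin

definition tiles_by_Z :: "real set \<Rightarrow> bool" where
  "tiles_by_Z E \<longleftrightarrow>
     (AE x in lebesgue. (\<Sum>\<^sub>\<infinity>k::int. (indicator E (x - of_int k) :: real)) = 1)"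

definition fourier_indicator :: "real set \<Rightarrow> real \<Rightarrow> complex" where
  "fourier_indicator E \<xi> = (LINT x:E|lebesgue. cis (- 2 * pi * x * \<xi>))"

end

theory Submission
  imports Defs
begin


lemma int_help:
  assumes "A \<in> sets lebesgue" "A \<subseteq> {a..b}"
  shows "integrable lebesgue (\<lambda>x. indicator A x *\<^sub>R cis (c * x))"
proof (rule integrableI_bounded_set_indicator[where B=1])
  show "A \<in> sets lebesgue" by fact
  show "(\<lambda>x. cis (c * x)) \<in> borel_measurable lebesgue"
    by (intro measurable_completion) (simp add: borel_measurable_continuous_onI continuous_intros)
  have "emeasure lebesgue A \<le> emeasure lebesgue {a..b}"
    using assms by (intro emeasure_mono) auto
  also have "\<dots> < \<infinity>" by (simp add: emeasure_lborel_Icc_eq)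
  finally show "emeasure lebesgue A < \<infinity>" .
  show "AE x in lebesgue. x \<in> A \<longrightarrow> norm (cis (c * x)) \<le> 1" by simp
qed

lemma I0:
  fixes \<xi> :: real
  assumes "\<xi> \<noteq> 0"
  shows "integral\<^sup>L lebesgue (\<lambda>x. indicator {0..<1} x *\<^sub>R cis (- 2 * pi * \<xi> * x))
     = (cis (- 2 * pi * \<xi>) - 1) * (\<i> / (2 * pi * \<xi>))"
proof -
  define G where "G = (\<lambda>x::real. cis (- 2 * pi * \<xi> * x) * (\<i> / (2 * pi * \<xi>)))"
  have d: "(G has_vector_derivative cis (- 2 * pi * \<xi> * x)) (at x within {0..1})" for x
    unfolding has_vector_derivative_def G_def
    apply (rule has_derivative_eq_rhs)
     apply (rule derivative_eq_intros | simp)+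
    using assms apply (auto simp: fun_eq_iff field_simps scaleR_conv_of_real)
    done
  have h1: "((\<lambda>x. cis (- 2 * pi * \<xi> * x)) has_integral (G 1 - G 0)) {0..1}"
    by (rule fundamental_theorem_of_calculus) (use d in auto)
  have si: "set_integrable lebesgue {0..1::real} (\<lambda>x. cis (- 2 * pi * \<xi> * x))"
    unfolding set_integrable_def by (rule int_help) auto
  have h2: "((\<lambda>x. cis (- 2 * pi * \<xi> * x)) has_integral (LINT x:{0..1}|lebesgue. cis (- 2 * pi * \<xi> * x))) {0..1}"
    by (rule has_integral_set_lebesgue[OF si])
  have eq: "(LINT x:{0..1}|lebesgue. cis (- 2 * pi * \<xi> * x)) = G 1 - G 0"
    using h1 h2 has_integral_unique by blast
  have ae: "AE x in lebesgue. (x::real) \<noteq> 1"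
    using AE_completion[OF AE_lborel_singleton[of "1::real"]] by simp
  have "integral\<^sup>L lebesgue (\<lambda>x. indicator {0..<1} x *\<^sub>R cis (- 2 * pi * \<xi> * x))
      = (LINT x:{0..1}|lebesgue. cis (- 2 * pi * \<xi> * x))"
    unfolding set_lebesgue_integral_def
  proof (rule integral_cong_AE)
    show "(\<lambda>x. indicator {0..<1} x *\<^sub>R cis (- 2 * pi * \<xi> * x)) \<in> borel_measurable lebesgue"
      by (rule borel_measurable_integrable, rule int_help[of _ 0 1]) auto
    show "(\<lambda>x. indicator {0..1} x *\<^sub>R cis (- 2 * pi * \<xi> * x)) \<in> borel_measurable lebesgue"
      by (rule borel_measurable_integrable, rule int_help[of _ 0 1]) auto
  qed (use ae in \<open>auto elim!: eventually_mono simp: indicator_def\<close>)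
  also have "\<dots> = G 1 - G 0" by (rule eq)
  finally show ?thesis unfolding G_def by (simp add: left_diff_distrib diff_divide_distrib)
qed


lemma cospos:
  fixes \<xi> x \<epsilon> :: real
  assumes "\<bar>\<xi>\<bar> \<le> 1/2" "0 \<le> x" "x \<le> 1/2 - \<epsilon>" "\<epsilon> > 0"
  shows "cos (2*pi*\<xi>*x) > 0"
proof -
  have "\<bar>\<xi>\<bar> * x \<le> 1/2 * x" using assms by (intro mult_right_mono) auto
  also have "\<dots> < 1/4" using assms by auto
  finally have "\<bar>\<xi> * x\<bar> < 1/4" using assms by (simp add: abs_mult)
  then have b: "-(1/4) < \<xi>*x" "\<xi>*x < 1/4" by (auto simp: abs_less_iff)
  have "2*pi*(\<xi>*x) < 2*pi*(1/4)" using mult_strict_left_mono[OF b(2), of "2*pi"] pi_gt_zero by linarith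
  moreover have "2*pi*(-(1/4)) < 2*pi*(\<xi>*x)" using mult_strict_left_mono[OF b(1), of "2*pi"] pi_gt_zero by linarith
  ultimately have "-(pi/2) < 2*pi*\<xi>*x" "2*pi*\<xi>*x < pi/2" by (auto simp: mult_ac)
  then show ?thesis by (rule cos_gt_zero_pi)
qed

lemma tile_pt:
  fixes E :: "real set"
  assumes "E \<subseteq> {0 .. 3/2 - \<epsilon>}" "\<epsilon> > 0" "0 \<le> x" "x < 1"
  shows "(\<Sum>\<^sub>\<infinity>k::int. (indicator E (x - of_int k) :: real)) = indicator E x + indicator E (x+1)"
proof -
  have "(\<Sum>\<^sub>\<infinity>k::int. (indicator E (x - of_int k) :: real)) = (\<Sum>\<^sub>\<infinity>k\<in>{0,-1}. (indicator E (x - of_int k) :: real))"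
  proof (rule infsum_cong_neutral)
    fix k :: int assume k: "k \<in> UNIV - {0,-1}"
    show "(indicator E (x - of_int k) :: real) = 0"
    proof (cases "k \<ge> 1")
      case True
      then have "x - of_int k < 0" using assms by linarith
      then show ?thesis using assms(1) by (auto simp: indicator_def)
    next
      case False
      then have "k \<le> -2" using k by auto
      then have "x - of_int k \<ge> 2" using assms by linarith
      then show ?thesis using assms by (auto simp: indicator_def)
    qed
  qed auto
  also have "\<dots> = indicator E x + indicator E (x+1)" by simp
  finally show ?thesis .
qed

theorem lemma3p2:
  fixes \<epsilon> :: real and E :: "real set"
  assumes "\<epsilon> > 0"
    and "E \<in> sets lebesgue"
    and "E \<subseteq> {0 .. 3/2 - \<epsilon>}"
    and "emeasure lebesgue E = 1"
    and "tiles_by_Z E"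
  shows "\<forall>\<xi>::real. -1/2 \<le> \<xi> \<and> \<xi> \<le> 1/2 \<longrightarrow> fourier_indicator E \<xi> \<noteq> 0"
proof (intro allI impI)
  fix \<xi> :: real
  assume xi: "-1/2 \<le> \<xi> \<and> \<xi> \<le> 1/2"
  define e where "e = (\<lambda>x::real. cis (- 2 * pi * \<xi> * x))"
  define w where "w = cis (- 2 * pi * \<xi>)"
  define C where "C = {x::real. 0 \<le> x \<and> x < 1 \<and> x + 1 \<in> E}"
  define A0 where "A0 = E \<inter> {0..<1}"
  define A1 where "A1 = E \<inter> {1..<2}"
  have Em: "E \<in> sets lebesgue" by fact
  have A0m: "A0 \<in> sets lebesgue" unfolding A0_def using Em by auto
  have A1m: "A1 \<in> sets lebesgue" unfolding A1_def using Em by auto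
  have Ceq: "C = {0..<1} \<inter> ((+) (-1) ` E)"
    unfolding C_def by (auto simp: image_iff intro!: bexI[where x="_ + 1"])
  have Cm: "C \<in> sets lebesgue" unfolding Ceq using lebesgue_sets_translation[OF Em, of "-1"] by auto
  have intE: "integrable lebesgue (\<lambda>x. indicator E x *\<^sub>R e x)"
    unfolding e_def by (rule int_help[OF Em, of 0 "3/2-\<epsilon>"]) (use assms in auto)
  have int0: "integrable lebesgue (\<lambda>x. indicator A0 x *\<^sub>R e x)"
    unfolding e_def by (rule int_help[OF A0m, of 0 1]) (auto simp: A0_def)
  have int1: "integrable lebesgue (\<lambda>x. indicator A1 x *\<^sub>R e x)"
    unfolding e_def by (rule int_help[OF A1m, of 0 2]) (auto simp: A1_def)
  have intC: "integrable lebesgue (\<lambda>x. indicator C x *\<^sub>R e x)"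
    unfolding e_def by (rule int_help[OF Cm, of 0 1]) (auto simp: C_def)
  have intI: "integrable lebesgue (\<lambda>x. indicator {0..<1} x *\<^sub>R e x)"
    unfolding e_def by (rule int_help[of _ 0 1]) auto
  define J where "J = integral\<^sup>L lebesgue (\<lambda>x. indicator C x *\<^sub>R e x)"
  define I0 where "I0 = integral\<^sup>L lebesgue (\<lambda>x. indicator {0..<1} x *\<^sub>R e x)"
  have F: "fourier_indicator E \<xi> = integral\<^sup>L lebesgue (\<lambda>x. indicator E x *\<^sub>R e x)"
    unfolding fourier_indicator_def set_lebesgue_integral_def e_def by (simp add: mult_ac)
  have s1: "integral\<^sup>L lebesgue (\<lambda>x. indicator E x *\<^sub>R e x)
     = integral\<^sup>L lebesgue (\<lambda>x. indicator A0 x *\<^sub>R e x) + integral\<^sup>L lebesgue (\<lambda>x. indicator A1 x *\<^sub>R e x)"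
  proof -
    have "(\<lambda>x. indicator E x *\<^sub>R e x) = (\<lambda>x. indicator A0 x *\<^sub>R e x + indicator A1 x *\<^sub>R e x)"
    proof -
      have "\<forall>x\<in>E. 0 \<le> x \<and> x < 2" using assms(1,3) by force
      then show ?thesis by (auto simp: fun_eq_iff indicator_def A0_def A1_def)
    qed
    then show ?thesis using int0 int1 by simp
  qed
  have s2: "integral\<^sup>L lebesgue (\<lambda>x. indicator A1 x *\<^sub>R e x) = w * J"
  proof -
    have ew: "e (x + 1) = w * e x" for x
      unfolding e_def w_def by (subst cis_mult) (rule arg_cong[where f=cis], simp add: algebra_simps)
    have "integral\<^sup>L lebesgue (\<lambda>x. indicator A1 x *\<^sub>R e x)
        = \<bar>1\<bar> *\<^sub>R integral\<^sup>L lebesgue (\<lambda>x. indicator A1 (1 + 1 * x) *\<^sub>R e (1 + 1 * x))"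
      by (rule lebesgue_integral_real_affine) simp
    also have "(\<lambda>x. indicator A1 (1 + 1 * x) *\<^sub>R e (1 + 1 * x)) = (\<lambda>x. w * (indicator C x *\<^sub>R e x))"
      by (auto simp: ew fun_eq_iff indicator_def A1_def C_def add_ac)
    also have "integral\<^sup>L lebesgue (\<lambda>x. w * (indicator C x *\<^sub>R e x)) = w * J"
      unfolding J_def by (rule integral_mult_right_zero)
    finally show ?thesis by simp
  qed
  have ae: "AE x in lebesgue. indicator A0 x *\<^sub>R e x = indicator {0..<1} x *\<^sub>R e x - indicator C x *\<^sub>R e x"
    using assms(5) unfolding tiles_by_Z_def
  proof (rule eventually_mono)
    fix x :: real
    assume h: "(\<Sum>\<^sub>\<infinity>k::int. (indicator E (x - of_int k) :: real)) = 1"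
    show "indicator A0 x *\<^sub>R e x = indicator {0..<1} x *\<^sub>R e x - indicator C x *\<^sub>R e x"
    proof (cases "0 \<le> x \<and> x < 1")
      case True
      then have "(indicator E x :: real) + indicator E (x+1) = 1"
        using h tile_pt[OF assms(3) assms(1)] by auto
      then show ?thesis using True
        by (auto simp: indicator_def A0_def C_def split: if_splits)
    next
      case False
      then show ?thesis by (auto simp: indicator_def A0_def C_def)
    qed
  qed
  have s3: "integral\<^sup>L lebesgue (\<lambda>x. indicator A0 x *\<^sub>R e x) = I0 - J"
  proof -
    have "integral\<^sup>L lebesgue (\<lambda>x. indicator A0 x *\<^sub>R e x)
       = integral\<^sup>L lebesgue (\<lambda>x. indicator {0..<1} x *\<^sub>R e x - indicator C x *\<^sub>R e x)"
      by (rule integral_cong_AE) (use ae int0 intI intC in auto)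
    also have "\<dots> = I0 - J" unfolding I0_def J_def using intI intC by simp
    finally show ?thesis .
  qed
  have Fe: "fourier_indicator E \<xi> = I0 + (w - 1) * J"
    using F s1 s2 s3 by (simp add: algebra_simps)
  show "fourier_indicator E \<xi> \<noteq> 0"
  proof (cases "\<xi> = 0")
    case True
    have "fourier_indicator E \<xi> = integral\<^sup>L lebesgue (\<lambda>x. indicator E x *\<^sub>R (1::complex))"
      using F True by (simp add: e_def)
    also have "\<dots> = integral\<^sup>L lebesgue (indicator E :: real \<Rightarrow> real) *\<^sub>R 1"
      by (rule integral_scaleR_left) (use assms(2,4) in \<open>auto intro!: integrable_real_indicator\<close>)
    also have "integral\<^sup>L lebesgue (indicator E :: real \<Rightarrow> real) = measure lebesgue E"
      by simp
    also have "measure lebesgue E = 1" using assms(4) by (simp add: measure_def)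
    finally show ?thesis by simp
  next
    case False
    have I0v: "I0 = (w - 1) * (\<i> / (2 * pi * \<xi>))"
      unfolding I0_def e_def w_def using I0[OF False] .
    have Fe2: "fourier_indicator E \<xi> = (w - 1) * (\<i> / (2 * pi * \<xi>) + J)"
      using Fe I0v by (simp add: algebra_simps)
    have w1: "w \<noteq> 1"
    proof
      assume "w = 1"
      then have "cos (- 2 * pi * \<xi>) = 1" unfolding w_def by (metis cis.sel(1) one_complex.sel(1))
      then obtain n :: int where n: "- 2 * pi * \<xi> = of_int n * 2 * pi" using cos_one_2pi_int[of "- 2 * pi * \<xi>"] by blast
      then have "pi * (\<xi> + of_int n) = 0" by (simp add: algebra_simps)
      then have "\<xi> = - of_int n" by simp
      with xi False have "\<bar>of_int n :: real\<bar> \<le> 1/2" "n \<noteq> 0" by auto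
      then show False by linarith
    qed
    have br: "\<i> / (2 * pi * \<xi>) + J \<noteq> 0"
    proof
      assume h: "\<i> / (2 * pi * \<xi>) + J = 0"
      then have "J = - (\<i> / (2 * pi * \<xi>))" by (metis add.commute eq_neg_iff_add_eq_0)
      also have "\<i> / (2 * pi * \<xi>) = \<i> * complex_of_real (1 / (2 * pi * \<xi>))" by simp
      finally have "Re J = 0" by simp
      moreover have "Re J = integral\<^sup>L lebesgue (\<lambda>x. Re (indicator C x *\<^sub>R e x))"
        unfolding J_def by (rule integral_bounded_linear[OF bounded_linear_Re intC, symmetric])
      moreover have intR: "integrable lebesgue (\<lambda>x. Re (indicator C x *\<^sub>R e x))"
        by (rule integrable_bounded_linear[OF bounded_linear_Re intC])
      moreover have pos: "x \<in> C \<Longrightarrow> Re (indicator C x *\<^sub>R e x) > 0" for x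
      proof -
        assume x: "x \<in> C"
        then have "0 \<le> x" "x \<le> 1/2 - \<epsilon>" using assms(3) by (auto simp: C_def)
        then have "cos (2*pi*\<xi>*x) > 0" using cospos[of \<xi> x \<epsilon>] xi assms(1) by auto
        then show ?thesis using x by (simp add: e_def)
      qed
      moreover have "Re (indicator C x *\<^sub>R e x) \<ge> 0" for x
        using pos[of x] by (cases "x \<in> C") auto
      ultimately have "AE x in lebesgue. Re (indicator C x *\<^sub>R e x) = 0"
        using integral_nonneg_eq_0_iff_AE[OF intR] by auto
      then have aeC: "AE x in lebesgue. indicator C x *\<^sub>R e x = 0"
        by (rule eventually_mono) (use pos in \<open>fastforce simp: indicator_def\<close>)
      have "J = 0"
        unfolding J_def using aeC by (rule integral_eq_zero_AE)
      with h False show False by simp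
    qed
    show ?thesis using Fe2 w1 br by simp
  qed
qed

end
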